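(* With the notation of the context, for every $\rho\in(-1,1)$ we have $D\le p\le G$ and $$V_D(x_0,s_0,\lambda)\le V(x_0,s_0,\lambda)\le V_G(x_0,s_0,\lambda).$$
   Context: Fix $T>0$, $r,\nu,\mu,x_0\in\mathbb R$, $\eta>0$, $\sigma>0$, $\rho\in(-1,1)$, $s_0>0$, $\lambda>0$, $\gamma>0$; $N$ is a standard Gaussian random variable; $W$ is the Lambert function (inverse of $x\in(-1,\infty)\mapsto xe^x$). Let $\theta=\lambda\gamma(1-\rho^2)$, $w=W\left(s_0\eta^2Te^{(\nu-\eta\rho\frac{\mu-r}{\sigma}-\frac{\eta^2}{2})T}\theta\right)$, $$D=\frac{\lambda e^{-rT}}{\theta\eta^2T}w\left(1+\frac w2\right),\qquad G=\frac{\lambda e^{-rT}}{\theta}\frac{w}{\eta^2T}\left(e^{\frac{\eta^2}{2}T}+\frac w2\right).$$ The asking reservation price of $\lambda$ units of the non-traded stock and the associated value function are $$p=-\frac{e^{-rT}}{\gamma(1-\rho^2)}\ln\mathbb E\exp\left(-\theta s_0e^{(\nu-\eta\rho\frac{\mu-r}{\sigma}-\frac{\eta^2}{2})T}e^{\eta\sqrt TN}\right),\qquad V(x_0,s_0,\lambda)=-\frac1\gamma\exp\left(-\gamma e^{rT}(x_0+p)-\frac{(\mu-r)^2}{2\sigma^2}T\right),$$ (model: non-traded $dS=S(\nu dt+\eta dZ)$, traded $dP=P(\mu dt+\sigma dB)$, correlation $\rho$, bond rate $r$, utility $-\frac1\gamma e^{-\gamma x}$), and for $X\in\{D,G\}$,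 $$V_X(x_0,s_0,\lambda)=-\frac1\gamma\exp\left(-\gamma e^{rT}(x_0+X)-\frac{(\mu-r)^2}{2\sigma^2}T\right).$$ *)

theory Defs
  imports "HOL-Probability.Probability"
begin

definition lambert_W :: "real \<Rightarrow> real" where
  "lambert_W y = (THE w. w > -1 \<and> w * exp w = y)"

definition drift :: "real \<Rightarrow> real \<Rightarrow> real \<Rightarrow> real \<Rightarrow> real \<Rightarrow> real \<Rightarrow> real" where
  "drift r \<nu> \<mu> \<eta> \<sigma> \<rho> = \<nu> - \<eta> * \<rho> * (\<mu> - r) / \<sigma> - \<eta>\<^sup>2 / 2"

definition theta :: "real \<Rightarrow> real \<Rightarrow> real \<Rightarrow> real" where
  "theta lam \<gamma> \<rho> = lam * \<gamma> * (1 - \<rho>\<^sup>2)"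

definition wval :: "real \<Rightarrow> real \<Rightarrow> real \<Rightarrow> real \<Rightarrow> real \<Rightarrow> real \<Rightarrow> real \<Rightarrow> real \<Rightarrow> real \<Rightarrow> real \<Rightarrow> real" where
  "wval T r \<nu> \<mu> \<eta> \<sigma> \<rho> s0 lam \<gamma> =
     lambert_W (s0 * \<eta>\<^sup>2 * T * exp (drift r \<nu> \<mu> \<eta> \<sigma> \<rho> * T) * theta lam \<gamma> \<rho>)"

definition Dval :: "real \<Rightarrow> real \<Rightarrow> real \<Rightarrow> real \<Rightarrow> real \<Rightarrow> real \<Rightarrow> real \<Rightarrow> real \<Rightarrow> real \<Rightarrow> real \<Rightarrow> real" where
  "Dval T r \<nu> \<mu> \<eta> \<sigma> \<rho> s0 lam \<gamma> =
     (let w = wval T r \<nu> \<mu> \<eta> \<sigma> \<rho> s0 lam \<gamma> in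
      lam * exp (- r * T) / (theta lam \<gamma> \<rho> * \<eta>\<^sup>2 * T) * w * (1 + w / 2))"

definition Gval :: "real \<Rightarrow> real \<Rightarrow> real \<Rightarrow> real \<Rightarrow> real \<Rightarrow> real \<Rightarrow> real \<Rightarrow> real \<Rightarrow> real \<Rightarrow> real \<Rightarrow> real" where
  "Gval T r \<nu> \<mu> \<eta> \<sigma> \<rho> s0 lam \<gamma> =
     (let w = wval T r \<nu> \<mu> \<eta> \<sigma> \<rho> s0 lam \<gamma> in
      lam * exp (- r * T) / theta lam \<gamma> \<rho> * (w / (\<eta>\<^sup>2 * T)) * (exp (\<eta>\<^sup>2 / 2 * T) + w / 2))"

(* asking reservation price; N is a standard Gaussian random variable on the probability space M *)
definition pval :: "'a measure \<Rightarrow> ('a \<Rightarrow> real) \<Rightarrow> real \<Rightarrow> real \<Rightarrow> real \<Rightarrow> real \<Rightarrow> real \<Rightarrow> real \<Rightarrow> real \<Rightarrow> real \<Rightarrow> real \<Rightarrow> real \<Rightarrow> real" where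
  "pval M N T r \<nu> \<mu> \<eta> \<sigma> \<rho> s0 lam \<gamma> =
     - (exp (- r * T) / (\<gamma> * (1 - \<rho>\<^sup>2))) *
       ln (prob_space.expectation M (\<lambda>\<omega>. exp (- theta lam \<gamma> \<rho> * s0 * exp (drift r \<nu> \<mu> \<eta> \<sigma> \<rho> * T)
                                                * exp (\<eta> * sqrt T * N \<omega>))))"

definition Vfun :: "real \<Rightarrow> real \<Rightarrow> real \<Rightarrow> real \<Rightarrow> real \<Rightarrow> real \<Rightarrow> real \<Rightarrow> real" where
  "Vfun T r \<mu> \<sigma> \<gamma> x0 q = - (1 / \<gamma>) * exp (- \<gamma> * exp (r * T) * (x0 + q) - (\<mu> - r)\<^sup>2 / (2 * \<sigma>\<^sup>2) * T)"

end

theory Submission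
  imports Defs
begin

lemma lambert_W_pos:
  fixes y :: real assumes y: "y > 0"
  shows "lambert_W y > 0 \<and> lambert_W y * exp (lambert_W y) = y"
proof -
  have "\<exists>x\<ge>0. x \<le> y \<and> x * exp x = y"
  proof (rule IVT[where f = "\<lambda>x. x * exp x"])
    show "0 * exp 0 \<le> y" using y by simp
    have "1 \<le> exp y" using y by simp
    then show "y \<le> y * exp y" using y by (simp add: mult_le_cancel_left1)
    show "0 \<le> y" using y by simp
    show "\<forall>x. 0 \<le> x \<and> x \<le> y \<longrightarrow> isCont (\<lambda>x. x * exp x) x" by (auto intro!: continuous_intros)
  qed
  then obtain x where x: "x \<ge> 0" "x * exp x = y" by blast
  have xpos: "x > 0" using x y by (cases "x = 0") auto
  have pos: "v > 0" if "v > -1 \<and> v * exp v = y" for v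
  proof (rule ccontr)
    assume "\<not> v > 0"
    then have "v * exp v \<le> 0" by (simp add: mult_nonpos_nonneg)
    with that y show False by simp
  qed
  have mono: "u * exp u < v * exp v" if "0 < u" "u < v" for u v :: real
    using that by (intro mult_strict_mono) auto
  have uniq: "v = x" if "v > -1 \<and> v * exp v = y" for v
  proof -
    have vp: "v > 0" using pos that by blast
    show ?thesis
    proof (rule ccontr)
      assume "v \<noteq> x"
      then have "v < x \<or> x < v" by linarith
      then show False using mono[of v x] mono[of x v] vp xpos that x by auto
    qed
  qed
  show ?thesis unfolding lambert_W_def
    apply (rule theI2[of _ x])
    using xpos x uniq pos by auto
qed

lemma nd_shift: "normal_density m 1 x = std_normal_density x * exp (m * x - m\<^sup>2 / 2)"
proof -
  have e: "- (x - m)\<^sup>2 / 2 = - x\<^sup>2 / 2 + (m * x - m\<^sup>2 / 2)"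
    by (simp add: power2_eq_square field_simps)
  have "exp (- (x - m)\<^sup>2 / 2) = exp (- x\<^sup>2 / 2) * exp (m * x - m\<^sup>2 / 2)"
    unfolding e exp_add by simp
  then show ?thesis unfolding normal_density_def by simp
qed

lemma std_exp: "std_normal_density x * exp (t * x) = exp (t\<^sup>2 / 2) * normal_density t 1 x"
proof -
  have h: "exp (t\<^sup>2 / 2) * exp (t * x - t\<^sup>2 / 2) = exp (t * x)"
    by (simp add: exp_add[symmetric])
  have "std_normal_density x * exp (t * x) = std_normal_density x * (exp (t\<^sup>2 / 2) * exp (t * x - t\<^sup>2 / 2))"
    by (simp only: h)
  also have "\<dots> = exp (t\<^sup>2 / 2) * (std_normal_density x * exp (t * x - t\<^sup>2 / 2))"
    by (simp only: mult_ac)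
  finally show ?thesis by (simp only: nd_shift[of t x])
qed

lemma integrable_std_exp: "integrable lborel (\<lambda>x. std_normal_density x * exp (t * x))"
  unfolding std_exp by simp

lemma integral_std_exp: "(\<integral>x. std_normal_density x * exp (t * x) \<partial>lborel) = exp (t\<^sup>2 / 2)"
  unfolding std_exp by simp

lemma key_aw:
  fixes a sg w :: real
  assumes "sg > 0" "w * exp w = a * sg\<^sup>2"
  shows "a * exp (- w) = w / sg\<^sup>2"
proof -
  have a: "a = w * exp w / sg\<^sup>2" using assms by (simp add: field_simps)
  show ?thesis unfolding a by (simp add: exp_minus field_simps)
qed

lemma integrable_phi_g:
  fixes a sg :: real assumes "a > 0"
  shows "integrable lborel (\<lambda>x. std_normal_density x * exp (- a * exp (sg * x)))"
proof -
  have b: "norm (std_normal_density x * exp (- a * exp (sg * x))) \<le> norm (std_normal_density x)" for x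
  proof -
    have "exp (- a * exp (sg * x)) \<le> 1" using assms by simp
    then show ?thesis by (simp add: abs_mult mult_left_le)
  qed
  show ?thesis
    apply (rule Bochner_Integration.integrable_bound[OF integrable_normal_density[of 1 0]])
     apply measurable
    using b by simp
qed

lemma lower_est:
  fixes a sg w :: real
  assumes a: "a > 0" and sg: "sg > 0" and w: "w > 0" and h: "w * exp w = a * sg\<^sup>2"
  shows "(\<integral>x. std_normal_density x * exp (- a * exp (sg * x)) \<partial>lborel) \<le> exp (- (w / sg\<^sup>2) * (1 + w / 2))"
proof -
  define q where "q = w / sg\<^sup>2"
  define k where "k = w / sg"
  have aw: "a * exp (- w) = q" using key_aw[OF sg h] q_def by simp
  have qk: "q * sg = k" unfolding q_def k_def using sg by (simp add: power2_eq_square)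
  have pw: "exp (- a * exp (sg * x)) \<le> exp (- q * (1 + w)) * exp ((- k) * x)" for x
  proof -
    have "exp (sg * x) = exp (- w) * exp (sg * x + w)" by (simp add: exp_add[symmetric])
    also have "\<dots> \<ge> exp (- w) * (1 + (sg * x + w))"
      by (intro mult_left_mono exp_ge_add_one_self) auto
    finally have "a * exp (sg * x) \<ge> a * (exp (- w) * (1 + (sg * x + w)))"
      using a by (intro mult_left_mono) auto
    also have "a * (exp (- w) * (1 + (sg * x + w))) = q * (1 + w) + k * x"
      by (simp add: algebra_simps aw[symmetric] qk[symmetric])
    finally have "- a * exp (sg * x) \<le> - q * (1 + w) + (- k) * x" by simp
    then have "exp (- a * exp (sg * x)) \<le> exp (- q * (1 + w) + (- k) * x)" by (simp only: exp_le_cancel_iff)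
    then show ?thesis by (simp only: exp_add)
  qed
  have "(\<integral>x. std_normal_density x * exp (- a * exp (sg * x)) \<partial>lborel)
      \<le> (\<integral>x. exp (- q * (1 + w)) * (std_normal_density x * exp ((- k) * x)) \<partial>lborel)"
  proof (rule integral_mono)
    show "integrable lborel (\<lambda>x. std_normal_density x * exp (- a * exp (sg * x)))"
      using integrable_phi_g[OF a] .
    show "integrable lborel (\<lambda>x. exp (- q * (1 + w)) * (std_normal_density x * exp ((- k) * x)))"
      by (intro integrable_mult_right integrable_std_exp)
    fix x
    show "std_normal_density x * exp (- a * exp (sg * x)) \<le> exp (- q * (1 + w)) * (std_normal_density x * exp ((- k) * x))"
      using mult_left_mono[OF pw[of x] normal_density_nonneg[of 0 1 x]] by (simp add: algebra_simps)
  qed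
  also have "\<dots> = exp (- q * (1 + w)) * exp ((- k)\<^sup>2 / 2)"
    by (simp only: integral_mult_right_zero integral_std_exp)
  also have "\<dots> = exp (- q * (1 + w) + (- k)\<^sup>2 / 2)" by (simp only: exp_add)
  also have "- q * (1 + w) + (- k)\<^sup>2 / 2 = - (w / sg\<^sup>2) * (1 + w / 2)"
    unfolding q_def k_def using sg by (simp add: field_simps power2_eq_square)
  finally show ?thesis .
qed

lemma nd_exp: "normal_density m 1 x * exp (t * x) = exp (m * t + t\<^sup>2 / 2) * normal_density (m + t) 1 x"
proof -
  have h: "(m * x - m\<^sup>2 / 2) + t * x = (m * t + t\<^sup>2 / 2) + ((m + t) * x - (m + t)\<^sup>2 / 2)"
    by (simp add: power2_eq_square algebra_simps)
  have "normal_density m 1 x * exp (t * x) = std_normal_density x * exp ((m * x - m\<^sup>2 / 2) + t * x)"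
    by (simp only: nd_shift[of m x] exp_add mult.assoc)
  also have "\<dots> = exp (m * t + t\<^sup>2 / 2) * (std_normal_density x * exp ((m + t) * x - (m + t)\<^sup>2 / 2))"
    by (simp only: h exp_add mult_ac)
  also have "\<dots> = exp (m * t + t\<^sup>2 / 2) * normal_density (m + t) 1 x"
    by (simp only: nd_shift[of "m + t" x])
  finally show ?thesis .
qed

lemma upper_est:
  fixes a sg w :: real
  assumes a: "a > 0" and sg: "sg > 0" and w: "w > 0" and h: "w * exp w = a * sg\<^sup>2"
  shows "exp (- (w / sg\<^sup>2) * (exp (sg\<^sup>2 / 2) + w / 2)) \<le> (\<integral>x. std_normal_density x * exp (- a * exp (sg * x)) \<partial>lborel)"
proof -
  define q where "q = w / sg\<^sup>2"
  define m where "m = - (w / sg)"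
  define C where "C = - (q * (exp (sg\<^sup>2 / 2) + w / 2))"
  define A where "A = 1 - C + m\<^sup>2 / 2"
  define Z where "Z = (\<lambda>x. - a * exp (sg * x) - m * x + m\<^sup>2 / 2)"
  have aw: "a * exp (- w) = q" using key_aw[OF sg h] q_def by simp
  define f1 where "f1 = (\<lambda>x. normal_density m 1 x)"
  define f2 where "f2 = (\<lambda>x. normal_density m 1 x * exp (sg * x))"
  define f3 where "f3 = (\<lambda>x. normal_density m 1 x * x)"
  have i1: "integrable lborel f1" unfolding f1_def by simp
  have i2: "integrable lborel f2" unfolding f2_def nd_exp by simp
  have i3: "integrable lborel f3" unfolding f3_def by (rule integrable_normal_moment_nz_1) simp
  have I1: "integral\<^sup>L lborel f1 = 1" unfolding f1_def by simp
  have I2: "integral\<^sup>L lborel f2 = exp (m * sg + sg\<^sup>2 / 2)" unfolding f2_def nd_exp by simp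
  have I3: "integral\<^sup>L lborel f3 = m" unfolding f3_def using integral_normal_moment_nz_1[where \<mu>=m and \<sigma>=1] by simp
  define R where "R = (\<lambda>x. exp C * (A * f1 x - a * f2 x - m * f3 x))"
  have iR: "integrable lborel R" unfolding R_def using i1 i2 i3 by simp
  have IR: "integral\<^sup>L lborel R = exp C * (A * 1 - a * exp (m * sg + sg\<^sup>2 / 2) - m * m)"
    unfolding R_def using i1 i2 i3 I1 I2 I3 by simp
  have pw: "R x \<le> std_normal_density x * exp (- a * exp (sg * x))" for x
  proof -
    have e0: "(m * x - m\<^sup>2 / 2) + Z x = - a * exp (sg * x)" unfolding Z_def by simp
    have e1: "std_normal_density x * exp (- a * exp (sg * x)) = normal_density m 1 x * exp (Z x)"
      by (simp only: nd_shift[of m x] e0[symmetric] exp_add mult.assoc)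
    have "exp (Z x) = exp C * exp (Z x - C)" by (simp add: exp_add[symmetric])
    also have "\<dots> \<ge> exp C * (1 + (Z x - C))"
      by (intro mult_left_mono exp_ge_add_one_self) auto
    finally have "normal_density m 1 x * exp (Z x) \<ge> normal_density m 1 x * (exp C * (1 + (Z x - C)))"
      by (intro mult_left_mono) auto
    moreover have "normal_density m 1 x * (exp C * (1 + (Z x - C))) = R x"
      unfolding R_def f1_def f2_def f3_def A_def Z_def by (simp add: algebra_simps)
    ultimately show ?thesis using e1 by simp
  qed
  have "integral\<^sup>L lborel R \<le> (\<integral>x. std_normal_density x * exp (- a * exp (sg * x)) \<partial>lborel)"
    by (rule integral_mono[OF iR integrable_phi_g[OF a] pw])
  moreover have "integral\<^sup>L lborel R = exp C"
  proof -
    have ms: "m * sg = - w" unfolding m_def using sg by simp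
    have "a * exp (m * sg + sg\<^sup>2 / 2) = q * exp (sg\<^sup>2 / 2)"
      unfolding ms by (simp only: exp_add aw[symmetric] mult.assoc)
    moreover have "m * m = q * w" unfolding m_def q_def by (simp add: power2_eq_square)
    ultimately have "A * 1 - a * exp (m * sg + sg\<^sup>2 / 2) - m * m = 1"
      unfolding A_def C_def by (simp add: power2_eq_square algebra_simps)
    then show ?thesis using IR by simp
  qed
  ultimately show ?thesis unfolding C_def q_def by simp
qed

lemma Vfun_mono:
  assumes "\<gamma> > 0" "q1 \<le> q2"
  shows "Vfun T r \<mu> \<sigma> \<gamma> x0 q1 \<le> Vfun T r \<mu> \<sigma> \<gamma> x0 q2"
proof -
  have "\<gamma> * exp (r * T) * (x0 + q1) \<le> \<gamma> * exp (r * T) * (x0 + q2)"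
    using assms by (intro mult_left_mono) auto
  then have "exp (- \<gamma> * exp (r * T) * (x0 + q2) - (\<mu> - r)\<^sup>2 / (2 * \<sigma>\<^sup>2) * T)
      \<le> exp (- \<gamma> * exp (r * T) * (x0 + q1) - (\<mu> - r)\<^sup>2 / (2 * \<sigma>\<^sup>2) * T)" by simp
  then show ?thesis unfolding Vfun_def using assms(1) by (simp add: divide_simps)
qed

theorem theorem4:
  fixes M :: "'a measure" and N :: "'a \<Rightarrow> real"
    and T r \<nu> \<mu> x0 \<eta> \<sigma> \<rho> s0 lam \<gamma> :: real
  assumes "prob_space M"
    and "distributed M lborel N std_normal_density"
    and "T > 0" and "\<eta> > 0" and "\<sigma> > 0" and "-1 < \<rho>" and "\<rho> < 1"
    and "s0 > 0" and "lam > 0" and "\<gamma> > 0"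
  shows "Dval T r \<nu> \<mu> \<eta> \<sigma> \<rho> s0 lam \<gamma> \<le> pval M N T r \<nu> \<mu> \<eta> \<sigma> \<rho> s0 lam \<gamma>
       \<and> pval M N T r \<nu> \<mu> \<eta> \<sigma> \<rho> s0 lam \<gamma> \<le> Gval T r \<nu> \<mu> \<eta> \<sigma> \<rho> s0 lam \<gamma>
       \<and> Vfun T r \<mu> \<sigma> \<gamma> x0 (Dval T r \<nu> \<mu> \<eta> \<sigma> \<rho> s0 lam \<gamma>)
           \<le> Vfun T r \<mu> \<sigma> \<gamma> x0 (pval M N T r \<nu> \<mu> \<eta> \<sigma> \<rho> s0 lam \<gamma>)
       \<and> Vfun T r \<mu> \<sigma> \<gamma> x0 (pval M N T r \<nu> \<mu> \<eta> \<sigma> \<rho> s0 lam \<gamma>)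
           \<le> Vfun T r \<mu> \<sigma> \<gamma> x0 (Gval T r \<nu> \<mu> \<eta> \<sigma> \<rho> s0 lam \<gamma>)"
proof -
  define d where "d = drift r \<nu> \<mu> \<eta> \<sigma> \<rho>"
  define th where "th = theta lam \<gamma> \<rho>"
  define a where "a = th * s0 * exp (d * T)"
  define sg where "sg = \<eta> * sqrt T"
  have rho2: "1 - \<rho>\<^sup>2 > 0"
  proof -
    have "\<bar>\<rho>\<bar> < 1" using assms(6,7) by auto
    then have "\<rho>\<^sup>2 < 1" by (simp add: abs_square_less_1)
    then show ?thesis by simp
  qed
  have thpos: "th > 0" unfolding th_def theta_def using assms rho2 by simp
  have apos: "a > 0" unfolding a_def using thpos assms by simp
  have sgpos: "sg > 0" unfolding sg_def using assms by simp
  have sg2: "sg\<^sup>2 = \<eta>\<^sup>2 * T" unfolding sg_def using assms(3) by (simp add: power_mult_distrib)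
  define w where "w = wval T r \<nu> \<mu> \<eta> \<sigma> \<rho> s0 lam \<gamma>"
  have wdef: "w = lambert_W (a * sg\<^sup>2)"
    unfolding w_def wval_def a_def sg2 d_def th_def by (simp add: ac_simps)
  have ypos: "a * sg\<^sup>2 > 0" using apos sgpos by simp
  have wpos: "w > 0" and wh: "w * exp w = a * sg\<^sup>2"
    using lambert_W_pos[OF ypos] wdef by auto
  define I where "I = (\<integral>x. std_normal_density x * exp (- a * exp (sg * x)) \<partial>lborel)"
  have E: "prob_space.expectation M (\<lambda>\<omega>. exp (- theta lam \<gamma> \<rho> * s0 * exp (drift r \<nu> \<mu> \<eta> \<sigma> \<rho> * T)
                                                * exp (\<eta> * sqrt T * N \<omega>))) = I"
  proof -
    have "I = (\<integral>\<omega>. exp (- a * exp (sg * N \<omega>)) \<partial>M)"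
      unfolding I_def by (rule distributed_integral[OF assms(2)]) auto
    also have "\<dots> = prob_space.expectation M (\<lambda>\<omega>. exp (- theta lam \<gamma> \<rho> * s0 * exp (drift r \<nu> \<mu> \<eta> \<sigma> \<rho> * T)
                                                * exp (\<eta> * sqrt T * N \<omega>)))"
      unfolding a_def sg_def th_def d_def by (simp add: ac_simps)
    finally show ?thesis by simp
  qed
  have lo: "I \<le> exp (- (w / sg\<^sup>2) * (1 + w / 2))"
    unfolding I_def by (rule lower_est[OF apos sgpos wpos wh])
  have up: "exp (- (w / sg\<^sup>2) * (exp (sg\<^sup>2 / 2) + w / 2)) \<le> I"
    unfolding I_def by (rule upper_est[OF apos sgpos wpos wh])
  have Ipos: "I > 0" using up by (meson exp_gt_zero less_le_trans)
  have lnlo: "ln I \<le> - (w / sg\<^sup>2) * (1 + w / 2)"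
    using lo Ipos by (metis exp_le_cancel_iff exp_ln)
  have lnup: "- (w / sg\<^sup>2) * (exp (sg\<^sup>2 / 2) + w / 2) \<le> ln I"
    using up Ipos by (metis exp_le_cancel_iff exp_ln)
  define c where "c = exp (- r * T) / (\<gamma> * (1 - \<rho>\<^sup>2))"
  have cpos: "c > 0" unfolding c_def using assms rho2 by simp
  have P: "pval M N T r \<nu> \<mu> \<eta> \<sigma> \<rho> s0 lam \<gamma> = c * (- ln I)"
    unfolding pval_def E c_def by simp
  have D: "Dval T r \<nu> \<mu> \<eta> \<sigma> \<rho> s0 lam \<gamma> = c * ((w / sg\<^sup>2) * (1 + w / 2))"
    unfolding Dval_def w_def[symmetric] Let_def c_def sg2 theta_def
    using assms rho2 by (simp add: field_simps)
  have G: "Gval T r \<nu> \<mu> \<eta> \<sigma> \<rho> s0 lam \<gamma> = c * ((w / sg\<^sup>2) * (exp (sg\<^sup>2 / 2) + w / 2))"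
    unfolding Gval_def w_def[symmetric] Let_def c_def sg2 theta_def
    using assms rho2 by (simp add: field_simps)
  have DP: "Dval T r \<nu> \<mu> \<eta> \<sigma> \<rho> s0 lam \<gamma> \<le> pval M N T r \<nu> \<mu> \<eta> \<sigma> \<rho> s0 lam \<gamma>"
    unfolding D P using cpos lnlo by (intro mult_left_mono) auto
  have PG: "pval M N T r \<nu> \<mu> \<eta> \<sigma> \<rho> s0 lam \<gamma> \<le> Gval T r \<nu> \<mu> \<eta> \<sigma> \<rho> s0 lam \<gamma>"
    unfolding G P using cpos lnup by (intro mult_left_mono) auto
  show ?thesis using DP PG Vfun_mono[OF assms(10)] by blast
qed

end
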